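(* Let $T=(A,B,C)$ be a nondegenerate, counterclockwise triangle all of whose angles are less than $120^\circ$, so that its flank triangles $F_a,F_b,F_c$ are nondegenerate and counterclockwise. Then the second isodynamic points of $F_a$, $F_b$, $F_c$ all coincide with the second isodynamic point $X_{16}$ of $T$.
   Context: Identify the Euclidean plane with $\mathbb{C}$ and put $\rho=e^{2\pi i/3}$. Let $T=(A,B,C)$ be a nondegenerate triangle whose vertices are listed counterclockwise. On each side of $T$ erect outwardly a regular hexagon, i.e. the regular hexagon having that side as an edge and lying on the opposite side of that side's line from the third vertex. The flank triangles of $T$ are: $F_a$ with vertices $A,\ A+\rho(C-A),\ A+\rho^{-1}(B-A)$; $F_b$ with vertices $B,\ B+\rho(A-B),\ B+\rho^{-1}(C-B)$; $F_c$ with vertices $C,\ C+\rho(B-C),\ C+\rho^{-1}(A-C)$. For example, $A+\rho(C-A)$ and $A+\rho^{-1}(B-A)$ are the vertices adjacent to $A$, other than $C$ resp. $B$, of the hexagons erected on $AC$ resp. $AB$. The angle of $F_a$ at $A$ equals $120^\circ-\angle A$, and similarly for $F_b$ and $F_c$. For a nondegenerate triangle with vertices $V_1,V_2,V_3$, let $\ell_i$ be the length of the side opposite $V_i$ and $\theta_i$ the angle at $V_i$. The second isodynamic point $X_{16}$ is the point with homogeneous barycentric coordinates $(\ell_1\sin(\theta_1-\pi/3):\ell_2\sin(\theta_2-\pi/3):\ell_3\sin(\theta_3-\pi/3))$. *)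

theory Defs
  imports "HOL-Analysis.Analysis"
begin

definition rho :: complex where
  "rho = cis (2 * pi / 3)"

definition ccw :: "complex \<Rightarrow> complex \<Rightarrow> complex \<Rightarrow> bool" where
  "ccw A B C \<longleftrightarrow> Im (cnj (B - A) * (C - A)) > 0"

definition vang :: "complex \<Rightarrow> complex \<Rightarrow> real" where
  "vang u v = arccos (Re (u * cnj v) / (cmod u * cmod v))"

definition tri_angle :: "complex \<Rightarrow> complex \<Rightarrow> complex \<Rightarrow> real" where
  "tri_angle V1 V2 V3 = vang (V2 - V1) (V3 - V1)"

definition flank_a :: "complex \<Rightarrow> complex \<Rightarrow> complex \<Rightarrow> complex \<times> complex \<times> complex" where
  "flank_a A B C = (A, A + rho * (C - A), A + inverse rho * (B - A))"
definition flank_b :: "complex \<Rightarrow> complex \<Rightarrow> complex \<Rightarrow> complex \<times> complex \<times> complex" where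
  "flank_b A B C = (B, B + rho * (A - B), B + inverse rho * (C - B))"
definition flank_c :: "complex \<Rightarrow> complex \<Rightarrow> complex \<Rightarrow> complex \<times> complex \<times> complex" where
  "flank_c A B C = (C, C + rho * (B - C), C + inverse rho * (A - C))"

text \<open>Point with homogeneous barycentric coordinates (w1:w2:w3) w.r.t. V1 V2 V3;
  None if the point is at infinity (w1+w2+w3 = 0).\<close>
definition bary :: "complex \<Rightarrow> complex \<Rightarrow> complex \<Rightarrow> real \<Rightarrow> real \<Rightarrow> real \<Rightarrow> complex option" where
  "bary V1 V2 V3 w1 w2 w3 =
     (if w1 + w2 + w3 = 0 then None
      else Some ((of_real w1 * V1 + of_real w2 * V2 + of_real w3 * V3) / of_real (w1 + w2 + w3)))"

definition X16 :: "complex \<times> complex \<times> complex \<Rightarrow> complex option" where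
  "X16 T = (case T of (V1, V2, V3) \<Rightarrow>
     bary V1 V2 V3
       (cmod (V2 - V3) * sin (tri_angle V1 V2 V3 - pi / 3))
       (cmod (V3 - V1) * sin (tri_angle V2 V3 V1 - pi / 3))
       (cmod (V1 - V2) * sin (tri_angle V3 V1 V2 - pi / 3)))"

end

theory Submission
  imports Defs
begin

definition Dt :: "complex \<Rightarrow> complex \<Rightarrow> complex \<Rightarrow> real" where
 "Dt V1 V2 V3 = Im (cnj (V2-V1) * (V3-V1))"
definition wgt :: "complex \<Rightarrow> complex \<Rightarrow> complex \<Rightarrow> real" where
 "wgt V1 V2 V3 = (cmod (V2 - V3))^2 * (Dt V1 V2 V3 - sqrt 3 * Re ((V2-V1) * cnj (V3-V1)))"
definition Qt :: "real \<Rightarrow> complex \<Rightarrow> complex \<Rightarrow> complex \<Rightarrow> real" where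
 "Qt s V1 V2 V3 = (cmod (V2-V3))^2 + (cmod (V3-V1))^2 + (cmod (V1-V2))^2 - 2 * s * Dt V1 V2 V3"

lemma cm2: "(cmod z)^2 = (Re z)^2 + (Im z)^2" by (simp add: cmod_power2)

lemma Dt_cyc: "Dt V2 V3 V1 = Dt V1 V2 V3"
  unfolding Dt_def by (simp add: algebra_simps)

lemma ccw_Dt: "ccw A B C \<longleftrightarrow> Dt A B C > 0"
  unfolding ccw_def Dt_def by simp

lemma vtx:
  assumes D: "Dt V1 V2 V3 > 0"
  shows "cmod (V2-V3) * sin (tri_angle V1 V2 V3 - pi/3)
     = wgt V1 V2 V3 / (2 * cmod (V2-V3) * cmod (V3-V1) * cmod (V1-V2))"
proof -
  define u where "u = V2 - V1"
  define v where "v = V3 - V1"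
  have Du: "Dt V1 V2 V3 = Re u * Im v - Im u * Re v" unfolding Dt_def u_def v_def by (simp add: algebra_simps)
  have u0: "u \<noteq> 0" using D unfolding Dt_def u_def by auto
  have v0: "v \<noteq> 0" using D unfolding Dt_def v_def by auto
  define R where "R = Re (u * cnj v)"
  have R: "R = Re u * Re v + Im u * Im v" unfolding R_def by simp
  have nu: "cmod u > 0" "cmod v > 0" using u0 v0 by auto
  have key: "(Dt V1 V2 V3)^2 + R^2 = (cmod u)^2 * (cmod v)^2"
    unfolding Du R cm2 by (simp add: algebra_simps power2_eq_square)
  define x where "x = R / (cmod u * cmod v)"
  have RR: "\<bar>R\<bar> \<le> cmod u * cmod v"
  proof -
    have "R^2 \<le> (cmod u)^2 * (cmod v)^2" using key zero_le_power2[of "Dt V1 V2 V3"] by linarith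
    hence "R^2 \<le> (cmod u * cmod v)^2" by (simp add: power_mult_distrib)
    hence "\<bar>R\<bar> \<le> \<bar>cmod u * cmod v\<bar>" by (simp only: abs_le_square_iff)
    thus ?thesis by simp
  qed
  have m0: "cmod u * cmod v > 0" using nu by simp
  have xa: "\<bar>x\<bar> = \<bar>R\<bar> / (cmod u * cmod v)" unfolding x_def using m0 by (simp add: abs_divide)
  have xb: "\<bar>x\<bar> \<le> 1" unfolding xa using RR m0 by (simp add: divide_le_eq)
  have ta: "tri_angle V1 V2 V3 = arccos x"
    unfolding tri_angle_def vang_def x_def R_def u_def v_def by simp
  have c: "cos (tri_angle V1 V2 V3) = x" using xb ta by (simp add: cos_arccos_abs)
  have key': "(Dt V1 V2 V3)^2 = (cmod u * cmod v)^2 - R^2" using key by (simp add: power_mult_distrib)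
  have "1 - x^2 = (Dt V1 V2 V3 / (cmod u * cmod v))^2"
    unfolding x_def power_divide key' using m0 u0 v0 by (simp add: diff_divide_distrib)
  hence sn: "sin (tri_angle V1 V2 V3) = Dt V1 V2 V3 / (cmod u * cmod v)"
    using xb ta D nu by (simp add: sin_arccos_abs)
  have e1: "cmod (V3 - V1) = cmod v" "cmod (V1 - V2) = cmod u"
    unfolding u_def v_def by (auto simp: norm_minus_commute)
  have l0: "cmod (V2 - V3) > 0" using D unfolding Dt_def by (auto simp: algebra_simps)
  have sf: "sin (tri_angle V1 V2 V3 - pi/3) = (Dt V1 V2 V3 - sqrt 3 * R) / (2 * cmod u * cmod v)"
    unfolding sin_diff sn c sin_60 cos_60 x_def using nu by (simp add: field_simps)
  have wf: "wgt V1 V2 V3 = (cmod (V2-V3))^2 * (Dt V1 V2 V3 - sqrt 3 * R)"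
    unfolding wgt_def R_def u_def v_def by simp
  show ?thesis unfolding e1 sf wf using l0 nu
    by (simp add: field_simps power2_eq_square)
qed

lemma bary_scale:
  assumes "k \<noteq> 0"
  shows "bary V1 V2 V3 (k*w1) (k*w2) (k*w3) = bary V1 V2 V3 w1 w2 w3"
proof -
  have s: "k*w1 + k*w2 + k*w3 = k*(w1+w2+w3)" by (simp add: algebra_simps)
  have n: "of_real (k*w1) * V1 + of_real (k*w2) * V2 + of_real (k*w3) * V3
     = of_real k * (of_real w1 * V1 + of_real w2 * V2 + of_real w3 * V3)" by (simp add: algebra_simps)
  have k: "complex_of_real k \<noteq> 0" using assms by simp
  show ?thesis unfolding bary_def s n using assms
    by (simp only: of_real_mult mult_divide_mult_cancel_left[OF k] mult_eq_0_iff, simp)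
qed

lemma X16_eq:
  assumes "ccw V1 V2 V3"
  shows "X16 (V1, V2, V3) = bary V1 V2 V3 (wgt V1 V2 V3) (wgt V2 V3 V1) (wgt V3 V1 V2)"
proof -
  have D: "Dt V1 V2 V3 > 0" using assms ccw_Dt by simp
  define P where "P = 2 * cmod (V2-V3) * cmod (V3-V1) * cmod (V1-V2)"
  define k where "k = 1 / P"
  have P0: "P \<noteq> 0" using D unfolding P_def Dt_def by (auto simp: algebra_simps)
  have k0: "k \<noteq> 0" using P0 unfolding k_def by simp
  have P2: "2 * cmod (V3-V1) * cmod (V1-V2) * cmod (V2-V3) = P" unfolding P_def by (simp only: ac_simps)
  have P3: "2 * cmod (V1-V2) * cmod (V2-V3) * cmod (V3-V1) = P" unfolding P_def by (simp only: ac_simps)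
  have a: "cmod (V2-V3) * sin (tri_angle V1 V2 V3 - pi/3) = k * wgt V1 V2 V3"
    unfolding vtx[OF D] P_def[symmetric] k_def by simp
  have D2: "Dt V2 V3 V1 > 0" using D Dt_cyc by simp
  have D3: "Dt V3 V1 V2 > 0" using D Dt_cyc by simp
  have b: "cmod (V3-V1) * sin (tri_angle V2 V3 V1 - pi/3) = k * wgt V2 V3 V1"
    unfolding vtx[OF D2] P2 k_def by simp
  have c: "cmod (V1-V2) * sin (tri_angle V3 V1 V2 - pi/3) = k * wgt V3 V1 V2"
    unfolding vtx[OF D3] P3 k_def by simp
  have "X16 (V1, V2, V3) = bary V1 V2 V3 (cmod (V2-V3) * sin (tri_angle V1 V2 V3 - pi/3))
     (cmod (V3-V1) * sin (tri_angle V2 V3 V1 - pi/3)) (cmod (V1-V2) * sin (tri_angle V3 V1 V2 - pi/3))"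
    unfolding X16_def by simp
  also have "\<dots> = bary V1 V2 V3 (wgt V1 V2 V3) (wgt V2 V3 V1) (wgt V3 V1 V2)"
    unfolding a b c bary_scale[OF k0] ..
  finally show ?thesis .
qed


lemma bary_alt: "bary V1 V2 V3 w1 w2 w3 = (if w1 + w2 + w3 = 0 then None
   else Some (V1 + (of_real w2 * (V2 - V1) + of_real w3 * (V3 - V1)) / of_real (w1 + w2 + w3)))"
proof (cases "w1 + w2 + w3 = 0")
  case False
  hence F: "complex_of_real (w1 + w2 + w3) \<noteq> 0" by (metis of_real_eq_0_iff)
  have "(of_real w1 * V1 + of_real w2 * V2 + of_real w3 * V3) / of_real (w1 + w2 + w3)
     = V1 + (of_real w2 * (V2 - V1) + of_real w3 * (V3 - V1)) / of_real (w1 + w2 + w3)"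
    using F by (simp add: field_simps)
  thus ?thesis unfolding bary_def using False by simp
qed (simp add: bary_def)

lemma sumT: "wgt V1 V2 V3 + wgt V2 V3 V1 + wgt V3 V1 V2 = Dt V1 V2 V3 * Qt (sqrt 3) V1 V2 V3"
  unfolding wgt_def Qt_def Dt_def cm2 by (simp add: algebra_simps power2_eq_square)

lemma QF: assumes "s^2 = 3"
  shows "Qt s A (A + Complex (-1/2) (s/2)*(C-A)) (A + Complex (-1/2) (-s/2)*(B-A)) = Qt s A B C"
proof -
  have ss: "s * s = 3" "\<And>x. s * (s * x) = 3*x" using assms by (auto simp: power2_eq_square mult.assoc[symmetric])
  show ?thesis unfolding Qt_def Dt_def cm2 by (simp add: algebra_simps power2_eq_square ss)
qed

definition "dd p q r t = p*t - q*(r::real)"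
definition "w2 (s::real) p q r t = (r^2+t^2)*(dd p q r t - s*(p^2+q^2 - p*r - q*t))"
definition "w3 (s::real) p q r t = (p^2+q^2)*(dd p q r t - s*(r^2+t^2 - p*r - q*t))"

lemma NRe: assumes "s * s = 3"
  shows "(w2 s (-(r + s*t)) ((s*r - t)) ((-p + s*q)) ((-s*p - q)) * (-(r + s*t))
        + w3 s (-(r + s*t)) ((s*r - t)) ((-p + s*q)) ((-s*p - q)) * ((-p + s*q))) * dd p q r t
   = 8 * (w2 s p q r t * p + w3 s p q r t * r) * dd (-(r + s*t)) ((s*r - t)) ((-p + s*q)) ((-s*p - q))"
proof -
  have ss: "\<And>x. s * (s * x) = 3*x" using assms by (metis mult.assoc)
  show ?thesis unfolding w2_def w3_def dd_def by (simp add: algebra_simps power2_eq_square ss assms)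
qed

lemma NIm: assumes "s * s = 3"
  shows "(w2 s (-(r + s*t)) ((s*r - t)) ((-p + s*q)) ((-s*p - q)) * (s*r - t)
        + w3 s (-(r + s*t)) ((s*r - t)) ((-p + s*q)) ((-s*p - q)) * (-s*p - q)) * dd p q r t
   = 8 * (w2 s p q r t * q + w3 s p q r t * t) * dd (-(r + s*t)) ((s*r - t)) ((-p + s*q)) ((-s*p - q))"
proof -
  have ss: "\<And>x. s * (s * x) = 3*x" using assms by (metis mult.assoc)
  show ?thesis unfolding w2_def w3_def dd_def by (simp add: algebra_simps power2_eq_square ss assms)
qed

lemma ddP: assumes "s * s = 3"
  shows "dd (-(r + s*t)) ((s*r - t)) ((-p + s*q)) ((-s*p - q)) = 2 * (s * (p*r + q*t) + dd p q r t)"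
proof -
  have ss: "\<And>x. s * (s * x) = 3*x" using assms by (metis mult.assoc)
  show ?thesis unfolding dd_def by (simp add: algebra_simps ss assms)
qed

lemma hom: "w2 s (a/2) (b/2) (c/2) (d/2) = w2 s a b c d / 16"
  "w3 s (a/2) (b/2) (c/2) (d/2) = w3 s a b c d / 16"
  "dd (a/2) (b/2) (c/2) (d/2) = dd a b c d / 4"
  unfolding w2_def w3_def dd_def by (simp_all add: field_simps power2_eq_square)

lemma wgt_w: "wgt Y Z X = w2 (sqrt 3) (Re (Y-X)) (Im (Y-X)) (Re (Z-X)) (Im (Z-X))"
  "wgt Z X Y = w3 (sqrt 3) (Re (Y-X)) (Im (Y-X)) (Re (Z-X)) (Im (Z-X))"
  "Dt X Y Z = dd (Re (Y-X)) (Im (Y-X)) (Re (Z-X)) (Im (Z-X))"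
  unfolding wgt_def w2_def w3_def dd_def Dt_def cm2 by (simp_all add: algebra_simps power2_eq_square)


lemma rho_C: "rho = Complex (-1/2) (sqrt 3/2)"
proof -
  have "sin (2*pi/3) = sqrt 3/2" using sin_120' by (simp add: mult.commute)
  thus ?thesis unfolding rho_def by (simp add: complex_eq_iff cos_120)
qed

lemma rhoi_C: "inverse rho = Complex (-1/2) (-(sqrt 3/2))"
proof -
  have "sin (2*pi/3) = sqrt 3/2" using sin_120' by (simp add: mult.commute)
  thus ?thesis unfolding rho_def by (simp add: complex_eq_iff cos_120)
qed

lemma rv: "Re (rho * z) = (-(Re z + sqrt 3 * Im z))/2" "Im (rho * z) = (sqrt 3 * Re z - Im z)/2"
  "Re (inverse rho * z) = (-Re z + sqrt 3 * Im z)/2" "Im (inverse rho * z) = (-(sqrt 3) * Re z - Im z)/2"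
  unfolding rhoi_C by (simp_all add: rho_C field_simps)

lemma angle_bound:
  assumes "tri_angle A B C < 2*pi/3" "Dt A B C > 0"
  shows "Dt A (A + rho * (C - A)) (A + inverse rho * (B - A)) > 0"
proof -
  define p where "p = Re (B-A)" define q where "q = Im (B-A)"
  define r where "r = Re (C-A)" define t where "t = Im (C-A)"
  define s where "s = sqrt 3"
  have ss: "s * s = 3" unfolding s_def by simp
  have s0: "s > 0" unfolding s_def by simp
  have D: "dd p q r t > 0" using assms(2) wgt_w(3)[of A B C] unfolding p_def q_def r_def t_def by simp
  have DF: "Dt A (A + rho * (C - A)) (A + inverse rho * (B - A))
     = dd ((-(r + s*t))/2) ((s*r - t)/2) ((-p + s*q)/2) ((-s*p - q)/2)"
    unfolding wgt_w(3) add_diff_cancel_left' rv p_def q_def r_def t_def s_def by (simp add: algebra_simps)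
  have DF2: "\<dots> = (s * (p*r + q*t) + dd p q r t) / 2"
    unfolding hom ddP[OF ss] by simp
  define m where "m = cmod (B-A) * cmod (C-A)"
  have m2: "m^2 = (p^2+q^2)*(r^2+t^2)" unfolding m_def p_def q_def r_def t_def
    by (simp add: power_mult_distrib cm2)
  have BA: "B \<noteq> A" "C \<noteq> A" using assms(2) unfolding Dt_def by auto
  have m0: "m > 0" using BA unfolding m_def by simp
  have key: "(dd p q r t)^2 + (p*r+q*t)^2 = m^2" unfolding m2 dd_def by (simp add: algebra_simps power2_eq_square)
  define x where "x = (p*r+q*t) / m"
  have ta: "tri_angle A B C = arccos x"
    unfolding tri_angle_def vang_def x_def m_def p_def q_def r_def t_def by (simp add: algebra_simps)
  have xl: "-1 \<le> x"
  proof -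
    have "(p*r+q*t)^2 \<le> m^2" using key zero_le_power2[of "dd p q r t"] by linarith
    hence "\<bar>p*r+q*t\<bar> \<le> \<bar>m\<bar>" by (simp only: abs_le_square_iff)
    hence "-m \<le> p*r+q*t" using m0 by linarith
    thus ?thesis unfolding x_def using m0 by (simp add: le_divide_eq)
  qed
  have x12: "x > -1/2"
  proof (rule ccontr)
    assume "\<not> x > -1/2"
    hence "arccos (-1/2) \<le> arccos x" using xl by (intro arccos_le_arccos) auto
    moreover have "arccos (-1/2) = 2*pi/3" using arccos_cos[of "2*pi/3"] cos_120 by simp
    ultimately show False using assms(1) ta by simp
  qed
  hence R: "2*(p*r+q*t) > -m" unfolding x_def using m0 by (simp add: field_simps)
  have "s * (p*r + q*t) + dd p q r t > 0"
  proof (cases "p*r+q*t \<ge> 0")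
    case True thus ?thesis using D s0 by (simp add: add_nonneg_pos)
  next
    case False
    have h: "-2*(p*r+q*t) < m" using R by linarith
    have "(-2*(p*r+q*t))*(-2*(p*r+q*t)) < m*m" using m0 False by (intro mult_strict_mono[OF h h]) auto
    moreover have "(-2*(p*r+q*t))*(-2*(p*r+q*t)) = 4*(p*r+q*t)^2" by (simp add: power2_eq_square algebra_simps)
    ultimately have "4*(p*r+q*t)^2 < m^2" by (simp add: power2_eq_square)
    hence "(dd p q r t)^2 > 3*(p*r+q*t)^2" using key by linarith
    moreover have "(s*(p*r+q*t))^2 = 3*(p*r+q*t)^2" unfolding power_mult_distrib using ss by (simp add: power2_eq_square)
    ultimately have "(dd p q r t)^2 > (s*(p*r+q*t))^2" by simp
    hence "\<bar>s*(p*r+q*t)\<bar> < \<bar>dd p q r t\<bar>" using abs_le_square_iff[of "dd p q r t" "s*(p*r+q*t)"] by linarith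
    thus ?thesis using D by linarith
  qed
  thus ?thesis unfolding DF DF2 by simp
qed


lemma reim: "Re (complex_of_real a * z + complex_of_real b * w) = a * Re z + b * Re w"
  "Im (complex_of_real a * z + complex_of_real b * w) = a * Im z + b * Im w" by simp_all

lemma fin:
  fixes a b c X Y d d' Q :: real
  assumes "d' \<noteq> 0" "d \<noteq> 0" "Q \<noteq> 0" "(a*X + b*Y)*d = 8*c*d'"
  shows "((a/16)*(X/2) + (b/16)*(Y/2))/((d'/4)*Q) = c/(d*Q)"
proof -
  have "((a/16)*(X/2) + (b/16)*(Y/2))/((d'/4)*Q) = ((a*X + b*Y)*d) / (8*d'*Q*d)"
    using assms(1-3) by (simp add: field_simps)
  also have "\<dots> = (8*c*d') / (8*d'*Q*d)" using assms(4) by simp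
  also have "\<dots> = c/(d*Q)" using assms(1-3) by (simp add: field_simps)
  finally show ?thesis .
qed

lemma main_a:
  assumes "ccw A B C" "tri_angle A B C < 2*pi/3"
  shows "X16 (flank_a A B C) = X16 (A, B, C)"
proof -
  define F2 where "F2 = A + rho * (C - A)"
  define F3 where "F3 = A + inverse rho * (B - A)"
  have D: "Dt A B C > 0" using assms(1) ccw_Dt by simp
  have DF: "Dt A F2 F3 > 0" unfolding F2_def F3_def using angle_bound[OF assms(2) D] .
  have XF: "X16 (flank_a A B C) = bary A F2 F3 (wgt A F2 F3) (wgt F2 F3 A) (wgt F3 A F2)"
    unfolding flank_a_def F2_def[symmetric] F3_def[symmetric] using DF ccw_Dt X16_eq by blast
  have XT: "X16 (A, B, C) = bary A B C (wgt A B C) (wgt B C A) (wgt C A B)"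
    using assms(1) X16_eq by blast
  define Q where "Q = Qt (sqrt 3) A B C"
  have QQ: "Qt (sqrt 3) A F2 F3 = Q"
  proof -
    have "Qt (sqrt 3) A (A + Complex (-1/2) (sqrt 3/2)*(C-A)) (A + Complex (-1/2) (-(sqrt 3/2))*(B-A)) = Q"
      unfolding Q_def using QF[of "sqrt 3" A C B] by simp
    thus ?thesis unfolding F2_def F3_def rhoi_C unfolding rho_C .
  qed
  define s where "s = sqrt 3"
  have ss: "s * s = 3" unfolding s_def by simp
  define p where "p = Re (B-A)" define q where "q = Im (B-A)"
  define r where "r = Re (C-A)" define t where "t = Im (C-A)"
  have F2A: "F2 - A = rho * (C - A)" "F3 - A = inverse rho * (B - A)" unfolding F2_def F3_def by simp_all
  have cF: "Re (F2 - A) = (-(r + s*t))/2" "Im (F2 - A) = (s*r - t)/2"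
      "Re (F3 - A) = (-p + s*q)/2" "Im (F3 - A) = (-s*p - q)/2"
    unfolding F2A rv p_def q_def r_def t_def s_def by simp_all
  have wT: "wgt B C A = w2 s p q r t" "wgt C A B = w3 s p q r t" "Dt A B C = dd p q r t"
    unfolding wgt_w(1)[where X=A and Y=B and Z=C] wgt_w(2)[where X=A and Y=B and Z=C] wgt_w(3)[where X=A and Y=B and Z=C] p_def q_def r_def t_def s_def by simp_all
  have wF: "wgt F2 F3 A = w2 s (-(r + s*t)) (s*r - t) (-p + s*q) (-s*p - q) / 16"
      "wgt F3 A F2 = w3 s (-(r + s*t)) (s*r - t) (-p + s*q) (-s*p - q) / 16"
      "Dt A F2 F3 = dd (-(r + s*t)) (s*r - t) (-p + s*q) (-s*p - q) / 4"
    unfolding wgt_w(1)[where X=A and Y=F2 and Z=F3] wgt_w(2)[where X=A and Y=F2 and Z=F3] wgt_w(3)[where X=A and Y=F2 and Z=F3] cF hom s_def by simp_all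
  show ?thesis
  proof (cases "Q = 0")
    case True
    thus ?thesis unfolding XF XT bary_alt sumT QQ Q_def[symmetric] by simp
  next
    case False
    have n1: "Dt A B C * Q \<noteq> 0" using D False by simp
    have n2: "Dt A F2 F3 * Q \<noteq> 0" using DF False by simp
    have d0: "dd p q r t \<noteq> 0" "dd (-(r + s*t)) (s*r - t) (-p + s*q) (-s*p - q) \<noteq> 0"
      using D DF wT wF by auto
    have "(of_real (wgt F2 F3 A) * (F2 - A) + of_real (wgt F3 A F2) * (F3 - A)) / of_real (Dt A F2 F3 * Q)
      = (of_real (wgt B C A) * (B - A) + of_real (wgt C A B) * (C - A)) / complex_of_real (Dt A B C * Q)"
    proof (rule complex_eqI)
      show "Re ((of_real (wgt F2 F3 A) * (F2 - A) + of_real (wgt F3 A F2) * (F3 - A)) / of_real (Dt A F2 F3 * Q))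
       = Re ((of_real (wgt B C A) * (B - A) + of_real (wgt C A B) * (C - A)) / complex_of_real (Dt A B C * Q))"
        unfolding Re_divide_of_real reim cF wF wT
        unfolding p_def[symmetric] r_def[symmetric]
        by (rule fin[OF d0(2) d0(1) False NRe[OF ss]])
      show "Im ((of_real (wgt F2 F3 A) * (F2 - A) + of_real (wgt F3 A F2) * (F3 - A)) / of_real (Dt A F2 F3 * Q))
       = Im ((of_real (wgt B C A) * (B - A) + of_real (wgt C A B) * (C - A)) / complex_of_real (Dt A B C * Q))"
        unfolding Im_divide_of_real reim cF wF wT
        unfolding q_def[symmetric] t_def[symmetric]
        by (rule fin[OF d0(2) d0(1) False NIm[OF ss]])
    qed
    thus ?thesis unfolding XF XT bary_alt sumT QQ Q_def[symmetric] using n1 n2 by simp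
  qed
qed


lemma bary_cyc: "bary V2 V3 V1 a2 a3 a1 = bary V1 V2 V3 a1 a2 a3"
proof -
  have "a2 + a3 + a1 = a1 + a2 + a3" by simp
  moreover have "of_real a2 * V2 + of_real a3 * V3 + of_real a1 * V1
     = of_real a1 * V1 + of_real a2 * V2 + (of_real a3 * V3 :: complex)" by simp
  ultimately show ?thesis unfolding bary_def by (simp add: ac_simps)
qed

lemma X16_cyc:
  assumes "ccw A B C"
  shows "X16 (B, C, A) = X16 (A, B, C)"
proof -
  have "ccw B C A" using assms ccw_Dt Dt_cyc by metis
  thus ?thesis using X16_eq[OF assms] X16_eq bary_cyc by metis
qed

lemma ccw_cyc: "ccw A B C \<Longrightarrow> ccw B C A" using ccw_Dt Dt_cyc by metis

theorem mainTheorem2: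
  fixes A B C :: complex
  assumes "ccw A B C"
    and "tri_angle A B C < 2 * pi / 3"
    and "tri_angle B C A < 2 * pi / 3"
    and "tri_angle C A B < 2 * pi / 3"
  shows "X16 (flank_a A B C) = X16 (A, B, C)
       \<and> X16 (flank_b A B C) = X16 (A, B, C)
       \<and> X16 (flank_c A B C) = X16 (A, B, C)"
proof (intro conjI)
  show "X16 (flank_a A B C) = X16 (A, B, C)" using main_a assms(1,2) by simp
  have c2: "ccw B C A" using ccw_cyc assms(1) by blast
  have c3: "ccw C A B" using ccw_cyc c2 by blast
  have fb: "flank_b A B C = flank_a B C A" unfolding flank_a_def flank_b_def by simp
  have fc: "flank_c A B C = flank_a C A B" unfolding flank_a_def flank_c_def by simp
  show "X16 (flank_b A B C) = X16 (A, B, C)"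
    unfolding fb main_a[OF c2 assms(3)] X16_cyc[OF assms(1)] ..
  show "X16 (flank_c A B C) = X16 (A, B, C)"
    unfolding fc main_a[OF c3 assms(4)] X16_cyc[OF c2] X16_cyc[OF assms(1)] ..
qed

end
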